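(* Let $\omega_p\in[0,\pi]$ and $\theta_p\in\mathbb{R}$. (I) If $\omega_p\in(0,\pi)$, then $$\sup_{f\in\mathbb{RF}_{\omega_p,\theta_p}}\theta_f'(\omega_p)=-\left|\frac{\sin\theta_p}{\sin\omega_p}\right|.$$ (II) If $\omega_p\in\{0,\pi\}$ and $\theta_p\in\{0,\pi\}$ (mod $2\pi$), then $\sup_{f\in\mathbb{RF}_{\omega_p,\theta_p}}\theta_f'(\omega_p)=0$. Moreover, when the supremum is zero (i.e. $\theta_p\in\{0,\pi\}$ mod $2\pi$) it is attained by $f(z)=1$ or $f(z)=-1$; when it is nonzero it is attained by a first-order all-pass function $f(z)=\pm\frac{az+1}{z+a}$ with a suitable sign and $|a|<1$ chosen so that $\theta_f(\omega_p)=\theta_p$ (mod $2\pi$).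
   Context: $\mathbb{T}$ is the unit circle, $\mathbb{D}$ the open unit disk. $\mathcal{RH}_\infty$: proper real-rational functions with all poles in $\mathbb{D}$, with $\|f\|_{H_\infty}=\sup_{\omega\in(-\pi,\pi]}|f(e^{j\omega})|$. For $f$ with $f(e^{j\omega})\neq0$ near $\omega$, $\theta_f(\omega):=\angle f(e^{j\omega})$ is a continuous choice of argument and $\theta_f'(\omega)$ its derivative in $\omega$. For $\omega_p\in[0,\pi]$ and $\theta_p\in\mathbb{R}$: $\mathbb{RF}_{\omega_p,\theta_p}:=\{f\in\mathcal{RH}_\infty:\ \|f\|_{H_\infty}=|f(e^{j\omega_p})|=1,\ \theta_f(\omega_p)=\theta_p \ (\mathrm{mod}\ 2\pi)\}$. *)

theory Defs
  imports "HOL-Analysis.Analysis" "HOL-Computational_Algebra.Polynomial"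
begin

definition RH_inf :: "(complex \<Rightarrow> complex) set" where
  "RH_inf = {f. \<exists>p q :: real poly. q \<noteq> 0 \<and> degree p \<le> degree q \<and>
       (\<forall>z. poly (map_poly complex_of_real q) z = 0 \<longrightarrow> cmod z < 1) \<and>
       f = (\<lambda>z. poly (map_poly complex_of_real p) z / poly (map_poly complex_of_real q) z)}"

definition hinf_norm :: "(complex \<Rightarrow> complex) \<Rightarrow> real" where
  "hinf_norm f = (SUP \<omega>\<in>{-pi<..pi}. cmod (f (cis \<omega>)))"

definition has_phase_deriv :: "(complex \<Rightarrow> complex) \<Rightarrow> real \<Rightarrow> real \<Rightarrow> bool" where
  "has_phase_deriv f \<omega> D \<longleftrightarrow> (\<exists>e>0. \<exists>\<theta>::real\<Rightarrow>real.
      (\<forall>t\<in>ball \<omega> e. f (cis t) = complex_of_real (cmod (f (cis t))) * cis (\<theta> t)) \<and>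
      continuous_on (ball \<omega> e) \<theta> \<and> (\<theta> has_real_derivative D) (at \<omega>))"

definition phase_deriv :: "(complex \<Rightarrow> complex) \<Rightarrow> real \<Rightarrow> real" where
  "phase_deriv f \<omega> = (THE D. has_phase_deriv f \<omega> D)"

text \<open>RF_{wp,thp}: ||f|| = |f(e^{j wp})| = 1 and the argument of f(e^{j wp}) equals thp mod 2pi
  (since |f(e^{j wp})| = 1 this says f(e^{j wp}) = e^{j thp}).\<close>
definition RF :: "real \<Rightarrow> real \<Rightarrow> (complex \<Rightarrow> complex) set" where
  "RF \<omega>p \<theta>p = {f \<in> RH_inf. hinf_norm f = 1 \<and> cmod (f (cis \<omega>p)) = 1 \<and> f (cis \<omega>p) = cis \<theta>p}"

end

theory Submission
  imports Defs "HOL-Complex_Analysis.Complex_Analysis"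
begin


lemma moeb_identity:
  fixes a b :: complex
  shows "(cmod (b - a))\<^sup>2 + (1 - (cmod a)\<^sup>2) * (1 - (cmod b)\<^sup>2) = (cmod (1 - cnj a * b))\<^sup>2"
  unfolding cmod_power2 by (simp add: power2_eq_square algebra_simps)

lemma schwarz_pick_dist:
  assumes holh: "h holomorphic_on ball 0 1"
    and lt: "\<And>z. norm z < 1 \<Longrightarrow> norm (h z) < 1"
    and z: "norm z < 1" and w: "norm w < 1"
  shows "cmod (Moebius_function 0 (h w) (h z)) \<le> cmod (Moebius_function 0 w z)"
proof -
  define G where "G = Moebius_function 0 (h w) \<circ> h \<circ> Moebius_function 0 (-w)"
  have m1: "Moebius_function 0 (-w) ` ball 0 1 \<subseteq> ball 0 1"
    using Moebius_function_norm_lt_1 w by auto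
  have m2: "h ` (Moebius_function 0 (-w) ` ball 0 1) \<subseteq> ball 0 1"
    using m1 lt by auto
  have holG: "G holomorphic_on ball 0 1"
  proof -
    have h1: "Moebius_function 0 (-w) holomorphic_on ball 0 1"
      by (rule Moebius_function_holomorphic) (use w in simp)
    have h2: "h \<circ> Moebius_function 0 (-w) holomorphic_on ball 0 1"
      by (rule holomorphic_on_compose_gen[OF h1 holh m1])
    have h3: "Moebius_function 0 (h w) holomorphic_on ball 0 1"
      by (rule Moebius_function_holomorphic) (use lt w in simp)
    have "Moebius_function 0 (h w) \<circ> (h \<circ> Moebius_function 0 (-w)) holomorphic_on ball 0 1"
      by (rule holomorphic_on_compose_gen[OF h2 h3]) (use m2 in \<open>auto simp: image_comp\<close>)
    then show ?thesis by (simp add: G_def o_assoc)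
  qed
  have G0: "G 0 = 0"
    by (simp add: G_def Moebius_function_of_zero Moebius_function_eq_zero)
  have Glt: "norm (G u) < 1" if "norm u < 1" for u
    unfolding G_def using that w lt Moebius_function_norm_lt_1 by auto
  have "norm (Moebius_function 0 w z) < 1"
    using Moebius_function_norm_lt_1 w z by blast
  from Schwarz_Lemma(1)[OF holG G0 Glt this]
  have "cmod (G (Moebius_function 0 w z)) \<le> cmod (Moebius_function 0 w z)" .
  moreover have "Moebius_function 0 (-w) (Moebius_function 0 w z) = z"
    by (rule Moebius_function_compose) (use w z in auto)
  ultimately show ?thesis by (simp add: G_def)
qed

lemma denom_pos:
  fixes a b :: complex
  assumes "norm a < 1" "norm b < 1"
  shows "(cmod (1 - cnj a * b))\<^sup>2 > 0"
proof -
  have "(1 - (cmod a)\<^sup>2) * (1 - (cmod b)\<^sup>2) > 0"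
    using assms mult_strict_mono'[of "cmod a" 1 "cmod a" 1] mult_strict_mono'[of "cmod b" 1 "cmod b" 1]
    by (intro mult_pos_pos) (auto simp: power2_eq_square)
  moreover have "(cmod (b - a))\<^sup>2 \<ge> 0" by simp
  ultimately show ?thesis using moeb_identity[of b a] by linarith
qed

lemma schwarz_pick:
  assumes holh: "h holomorphic_on ball 0 1"
    and lt: "\<And>z. norm z < 1 \<Longrightarrow> norm (h z) < 1"
    and z: "norm z < 1" and w: "norm w < 1"
  shows "(1 - (cmod z)\<^sup>2) * (1 - (cmod w)\<^sup>2) * (cmod (1 - h z * cnj (h w)))\<^sup>2
       \<le> (1 - (cmod (h z))\<^sup>2) * (1 - (cmod (h w))\<^sup>2) * (cmod (1 - z * cnj w))\<^sup>2"
proof -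
  define Ah where "Ah = (cmod (1 - cnj (h w) * h z))\<^sup>2"
  define A where "A = (cmod (1 - cnj w * z))\<^sup>2"
  define Ph where "Ph = (1 - (cmod (h w))\<^sup>2) * (1 - (cmod (h z))\<^sup>2)"
  define P where "P = (1 - (cmod w)\<^sup>2) * (1 - (cmod z)\<^sup>2)"
  have idh: "(cmod (h z - h w))\<^sup>2 = Ah - Ph"
    using moeb_identity[of "h z" "h w"] by (simp add: Ah_def Ph_def)
  have id: "(cmod (z - w))\<^sup>2 = A - P"
    using moeb_identity[of z w] by (simp add: A_def P_def)
  have Ahp: "Ah > 0" unfolding Ah_def by (rule denom_pos) (use lt z w in auto)
  have Ap: "A > 0" unfolding A_def by (rule denom_pos) (use lt z w in auto)
  have "cmod ((h z - h w) / (1 - cnj (h w) * h z)) \<le> cmod ((z - w) / (1 - cnj w * z))"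
    using schwarz_pick_dist[OF holh lt z w] by (simp add: Moebius_function_def)
  then have "(cmod ((h z - h w) / (1 - cnj (h w) * h z)))\<^sup>2 \<le> (cmod ((z - w) / (1 - cnj w * z)))\<^sup>2"
    by (intro power_mono) auto
  then have q: "(cmod (h z - h w))\<^sup>2 / Ah \<le> (cmod (z - w))\<^sup>2 / A"
    by (simp add: Ah_def A_def norm_divide power_divide)
  have "(cmod (h z - h w))\<^sup>2 * A \<le> (cmod (z - w))\<^sup>2 * Ah"
  proof -
    from q have "(cmod (h z - h w))\<^sup>2 / Ah * (Ah * A) \<le> (cmod (z - w))\<^sup>2 / A * (Ah * A)"
      by (rule mult_right_mono) (use Ahp Ap in simp)
    then show ?thesis using Ahp Ap by (simp add: mult.commute mult.left_commute)
  qed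
  then have "(Ah - Ph) * A \<le> (A - P) * Ah" by (simp add: idh id)
  then have "P * Ah \<le> Ph * A" by (simp add: algebra_simps)
  moreover have e1: "h z * cnj (h w) = cnj (h w) * h z" by (rule mult.commute)
  moreover have e2: "z * cnj w = cnj w * z" by (rule mult.commute)
  ultimately show ?thesis unfolding Ah_def A_def Ph_def P_def e1 e2 by (simp only: mult_ac)
qed



lemma schwarz_pick_le:
  assumes holh: "h holomorphic_on ball 0 1"
    and le: "\<And>z. norm z < 1 \<Longrightarrow> norm (h z) \<le> 1"
    and z: "norm z < 1" and w: "norm w < 1"
  shows "(1 - (cmod z)\<^sup>2) * (1 - (cmod w)\<^sup>2) * (cmod (1 - h z * cnj (h w)))\<^sup>2
       \<le> (1 - (cmod (h z))\<^sup>2) * (1 - (cmod (h w))\<^sup>2) * (cmod (1 - z * cnj w))\<^sup>2"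
proof (cases "\<forall>u. norm u < 1 \<longrightarrow> norm (h u) < 1")
  case True
  then show ?thesis using schwarz_pick[OF holh _ z w] by blast
next
  case False
  then obtain \<xi> where xi: "norm \<xi> < 1" "norm (h \<xi>) = 1"
    using le by (meson le_less)
  have "h constant_on ball 0 1"
    by (rule maximum_modulus_principle[OF holh open_ball connected_ball open_ball subset_refl, of \<xi>])
       (use xi le in auto)
  then obtain c where c: "\<And>u. u \<in> ball 0 1 \<Longrightarrow> h u = c" by (auto simp: constant_on_def)
  have hz: "h z = c" and hw: "h w = c" using c z w by auto
  have nc: "norm c = 1" using c xi by force
  have "c * cnj c = 1" by (metis complex_norm_square nc of_real_1 power_one)
  then show ?thesis by (simp add: hz hw nc)
qed

lemma phase_unique:
  assumes h1: "has_phase_deriv f \<omega> D1" and h2: "has_phase_deriv f \<omega> D2"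
    and nz: "e0 > 0" "\<And>t. t \<in> ball \<omega> e0 \<Longrightarrow> f (cis t) \<noteq> 0"
  shows "D1 = D2"
proof -
  obtain e1 \<theta>1 where e1: "e1 > 0" and r1: "\<forall>t\<in>ball \<omega> e1. f (cis t) = complex_of_real (cmod (f (cis t))) * cis (\<theta>1 t)"
    and d1: "(\<theta>1 has_real_derivative D1) (at \<omega>)"
    using h1 unfolding has_phase_deriv_def by blast
  obtain e2 \<theta>2 where e2: "e2 > 0" and r2: "\<forall>t\<in>ball \<omega> e2. f (cis t) = complex_of_real (cmod (f (cis t))) * cis (\<theta>2 t)"
    and d2: "(\<theta>2 has_real_derivative D2) (at \<omega>)"
    using h2 unfolding has_phase_deriv_def by blast
  define g where "g t = \<theta>1 t - \<theta>2 t" for t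
  have dg: "(g has_real_derivative (D1 - D2)) (at \<omega>)"
    unfolding g_def by (intro derivative_intros d1 d2)
  have cg: "isCont g \<omega>" using dg by (rule DERIV_isCont)
  define e where "e = min e0 (min e1 e2)"
  have ep: "e > 0" using nz e1 e2 by (simp add: e_def)
  have int: "\<exists>n::int. g t = of_int (2 * n) * pi" if t: "t \<in> ball \<omega> e" for t
  proof -
    have t1: "t \<in> ball \<omega> e1" "t \<in> ball \<omega> e2" "t \<in> ball \<omega> e0" using t by (auto simp: e_def)
    have "complex_of_real (cmod (f (cis t))) * cis (\<theta>1 t) = complex_of_real (cmod (f (cis t))) * cis (\<theta>2 t)"
      using r1 r2 t1 by metis
    moreover have "complex_of_real (cmod (f (cis t))) \<noteq> 0" using nz t1 by simp
    ultimately have "cis (\<theta>1 t) = cis (\<theta>2 t)" by simp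
    then have "cis (g t) = 1" unfolding g_def by (simp add: cis_divide[symmetric])
    then have "exp (\<i> * complex_of_real (g t)) = 1" by (simp add: cis_conv_exp)
    then show ?thesis by (simp add: exp_eq_1)
  qed
  have ev: "\<forall>\<^sub>F t in nhds \<omega>. g t = g \<omega>"
  proof -
    have "\<forall>\<^sub>F t in at \<omega>. dist (g t) (g \<omega>) < pi"
      using cg unfolding isCont_def by (intro tendstoD) auto
    then have "\<forall>\<^sub>F t in nhds \<omega>. dist (g t) (g \<omega>) < pi"
      by (simp add: eventually_nhds_conv_at)
    moreover have "\<forall>\<^sub>F t in nhds \<omega>. t \<in> ball \<omega> e"
      using ep by (intro eventually_nhds_in_open) auto
    ultimately show ?thesis
    proof eventually_elim
      case (elim t)
      obtain n where n: "g t = of_int (2 * n) * pi" using int elim(2) by blast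
      obtain m where m: "g \<omega> = of_int (2 * m) * pi" using int ep by fastforce
      have "\<bar>of_int (2 * n) * pi - of_int (2 * m) * pi\<bar> < pi" using elim(1) n m by (simp add: dist_real_def)
      then have "\<bar>real_of_int (2 * n - 2 * m)\<bar> * pi < 1 * pi"
        by (simp add: left_diff_distrib[symmetric] abs_mult)
      then have "\<bar>real_of_int (2 * n - 2 * m)\<bar> < 1" by (simp add: mult_less_cancel_right)
      then have "n = m" by linarith
      then show ?case using n m by simp
    qed
  qed
  have "(g has_real_derivative 0) (at \<omega>)"
    using DERIV_cong_ev[OF refl ev refl, of 0] DERIV_const by simp
  with dg have "D1 - D2 = 0" by (rule DERIV_unique)
  then show ?thesis by simp
qed

lemma phase_exists:
  assumes S: "open S" "cis \<omega> \<in> S" and holf: "f holomorphic_on S" and fz: "f (cis \<omega>) = cis \<theta>"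
  shows "has_phase_deriv f \<omega> (Re (cis \<omega> * deriv f (cis \<omega>) * cnj (cis \<theta>)))"
proof -
  define x where "x t = f (cis t) / cis \<theta>" for t
  define T where "T = cis -` S"
  have ccis: "isCont cis t" for t
  proof -
    have eq: "cis = (\<lambda>t. exp (\<i> * complex_of_real t))" by (rule ext) (simp add: cis_conv_exp)
    have "isCont (\<lambda>t. exp (\<i> * complex_of_real t)) t" by (intro continuous_intros)
    then show ?thesis by (subst eq)
  qed
  have oT: "open T" unfolding T_def by (rule continuous_open_vimage[OF S(1)]) (use ccis in auto)
  have wT: "\<omega> \<in> T" using S by (simp add: T_def)
  have contf: "continuous_on S f" using holf by (rule holomorphic_on_imp_continuous_on)
  have contx: "continuous_on T x"
    unfolding x_def
  proof (intro continuous_intros)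
    show "continuous_on T (\<lambda>t. f (cis t))"
      by (rule continuous_on_compose2[OF contf]) (auto simp: T_def intro!: continuous_intros)
  qed auto
  have x1: "x \<omega> = 1" by (simp add: x_def fz)
  have "isCont x \<omega>" using contx oT wT by (simp add: continuous_on_eq_continuous_at)
  then have "((\<lambda>t. Re (x t)) \<longlongrightarrow> Re (x \<omega>)) (at \<omega>)"
    by (intro tendsto_intros) (simp add: isCont_def)
  then have "\<forall>\<^sub>F t in at \<omega>. Re (x t) > 0"
    using x1 by (intro order_tendstoD) auto
  then have ev1: "\<forall>\<^sub>F t in nhds \<omega>. Re (x t) > 0" using x1 by (simp add: eventually_nhds_conv_at)
  have ev2: "\<forall>\<^sub>F t in nhds \<omega>. t \<in> T" using oT wT by (rule eventually_nhds_in_open)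
  from eventually_conj[OF ev1 ev2] obtain e where e: "e > 0"
    and eb: "\<And>t. dist t \<omega> < e \<Longrightarrow> Re (x t) > 0 \<and> t \<in> T"
    unfolding eventually_nhds_metric by blast
  have inb: "Re (x t) > 0" "t \<in> T" if "t \<in> ball \<omega> e" for t
    using eb that by (auto simp: dist_commute)
  define th where "th t = \<theta> + Im (Ln (x t))" for t
  have rep: "f (cis t) = complex_of_real (cmod (f (cis t))) * cis (th t)" if t: "t \<in> ball \<omega> e" for t
  proof -
    have xnz: "x t \<noteq> 0" using inb[OF t] by auto
    have fx: "f (cis t) = cis \<theta> * x t" by (simp add: x_def)
    have "x t = exp (Ln (x t))" using xnz by simp
    also have "\<dots> = complex_of_real (exp (Re (Ln (x t)))) * cis (Im (Ln (x t)))" by (rule exp_eq_polar)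
    also have "exp (Re (Ln (x t))) = cmod (x t)" using xnz by (metis exp_Ln norm_exp_eq_Re)
    finally have "x t = complex_of_real (cmod (x t)) * cis (Im (Ln (x t)))" .
    moreover have "cmod (f (cis t)) = cmod (x t)" by (simp add: fx norm_mult)
    ultimately show ?thesis using fx by (simp add: th_def cis_mult[symmetric] mult_ac)
  qed
  have cont: "continuous_on (ball \<omega> e) th"
    unfolding th_def
  proof (intro continuous_intros continuous_on_Ln')
    show "continuous_on (ball \<omega> e) x" by (rule continuous_on_subset[OF contx]) (use inb(2) in auto)
    show "x t \<notin> \<real>\<^sub>\<le>\<^sub>0" if "t \<in> ball \<omega> e" for t using inb(1)[OF that] by (auto simp: complex_nonpos_Reals_iff)
  qed
  define c where "c = deriv f (cis \<omega>)"
  have df: "(f has_field_derivative c) (at (exp (\<i> * of_real \<omega>)))"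
    unfolding c_def using holomorphic_derivI[OF holf S(1) S(2)] by (simp add: cis_conv_exp)
  have dexp: "((\<lambda>s. exp (\<i> * s)) has_field_derivative (exp (\<i> * of_real \<omega>) * \<i>)) (at (of_real \<omega>))"
    by (auto intro!: derivative_eq_intros)
  have d1: "((\<lambda>s. f (exp (\<i> * s))) has_field_derivative c * (exp (\<i> * of_real \<omega>) * \<i>)) (at (of_real \<omega>))"
    by (rule DERIV_chain2[OF df dexp])
  have d2: "((\<lambda>s. f (exp (\<i> * s)) / cis \<theta>) has_field_derivative c * (exp (\<i> * of_real \<omega>) * \<i>) / cis \<theta>) (at (of_real \<omega>))"
    by (rule DERIV_cdivide[OF d1])
  have one: "f (exp (\<i> * of_real \<omega>)) / cis \<theta> = 1" using fz by (simp add: cis_conv_exp[symmetric])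
  have dLn: "(Ln has_field_derivative inverse 1) (at (f (exp (\<i> * of_real \<omega>)) / cis \<theta>))"
    unfolding one by (rule has_field_derivative_Ln) (simp add: complex_nonpos_Reals_iff)
  have d3: "((\<lambda>s. Ln (f (exp (\<i> * s)) / cis \<theta>)) has_field_derivative inverse 1 * (c * (exp (\<i> * of_real \<omega>) * \<i>) / cis \<theta>)) (at (of_real \<omega>))"
    by (rule DERIV_chain2[OF dLn d2])
  have d4: "((\<lambda>t. Ln (f (exp (\<i> * of_real t)) / cis \<theta>)) has_vector_derivative inverse 1 * (c * (exp (\<i> * of_real \<omega>) * \<i>) / cis \<theta>)) (at \<omega>)"
    by (rule has_vector_derivative_real_field[OF d3])
  have d5: "((\<lambda>t. \<theta> + Im (Ln (f (exp (\<i> * of_real t)) / cis \<theta>))) has_real_derivative 0 + Im (inverse 1 * (c * (exp (\<i> * of_real \<omega>) * \<i>) / cis \<theta>))) (at \<omega>)"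
    by (intro DERIV_add DERIV_const has_field_derivative_Im d4)
  have eqf: "(\<lambda>t. \<theta> + Im (Ln (f (exp (\<i> * of_real t)) / cis \<theta>))) = th"
    by (rule ext) (simp add: th_def x_def cis_conv_exp)
  have val: "0 + Im (inverse 1 * (c * (exp (\<i> * of_real \<omega>) * \<i>) / cis \<theta>)) = Re (cis \<omega> * c * cnj (cis \<theta>))"
    by (simp add: cis_conv_exp[symmetric] cis_cnj divide_complex_def inverse_complex_def mult_ac)
  have "(th has_real_derivative Re (cis \<omega> * c * cnj (cis \<theta>))) (at \<omega>)"
    using d5 unfolding eqf val .
  then show ?thesis unfolding has_phase_deriv_def c_def using e rep cont by blast
qed

lemma phase_deriv_eq:
  assumes S: "open S" "cis \<omega> \<in> S" and holf: "f holomorphic_on S" and fz: "f (cis \<omega>) = cis \<theta>"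
  shows "phase_deriv f \<omega> = Re (cis \<omega> * deriv f (cis \<omega>) * cnj (cis \<theta>))"
proof -
  have ccis: "isCont cis t" for t
  proof -
    have eq: "cis = (\<lambda>t. exp (\<i> * complex_of_real t))" by (rule ext) (simp add: cis_conv_exp)
    have "isCont (\<lambda>t. exp (\<i> * complex_of_real t)) t" by (intro continuous_intros)
    then show ?thesis by (subst eq)
  qed
  have "isCont f (cis \<omega>)"
    using holomorphic_on_imp_continuous_on[OF holf] S by (simp add: continuous_on_eq_continuous_at)
  then have "isCont (\<lambda>t. f (cis t)) \<omega>" using ccis by (rule isCont_o2[rotated])
  then have "((\<lambda>t. f (cis t)) \<longlongrightarrow> cis \<theta>) (at \<omega>)" using fz by (simp add: isCont_def)
  then have "\<forall>\<^sub>F t in at \<omega>. f (cis t) \<noteq> 0" by (intro tendsto_imp_eventually_ne) auto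
  then have "\<forall>\<^sub>F t in nhds \<omega>. f (cis t) \<noteq> 0" using fz by (simp add: eventually_nhds_conv_at)
  then obtain e0 where e0: "e0 > 0" "\<And>t. dist t \<omega> < e0 \<Longrightarrow> f (cis t) \<noteq> 0"
    unfolding eventually_nhds_metric by blast
  have nz: "\<And>t. t \<in> ball \<omega> e0 \<Longrightarrow> f (cis t) \<noteq> 0" using e0 by (auto simp: dist_commute)
  show ?thesis unfolding phase_deriv_def
  proof (rule the_equality)
    show "has_phase_deriv f \<omega> (Re (cis \<omega> * deriv f (cis \<omega>) * cnj (cis \<theta>)))" by (rule phase_exists[OF assms])
    show "D = Re (cis \<omega> * deriv f (cis \<omega>) * cnj (cis \<theta>))" if "has_phase_deriv f \<omega> D" for D
      by (rule phase_unique[OF that phase_exists[OF assms] e0(1) nz])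
  qed
qed



lemma re_identity:
  fixes t a :: complex
  assumes "cmod t = 1"
  shows "Re (cnj t * (t - a)) + Re (a * cnj (t - a)) = 1 - (cmod a)\<^sup>2"
proof -
  have "(cmod t)\<^sup>2 = 1" using assms by simp
  then have "(Re t)\<^sup>2 + (Im t)\<^sup>2 = 1" unfolding cmod_power2 .
  then show ?thesis unfolding cmod_power2 by (simp add: power2_eq_square algebra_simps)
qed

lemma boundary_bound:
  assumes S: "open S" "cis \<omega> \<in> S" and holf: "f holomorphic_on S"
    and holH: "H holomorphic_on ball 0 1" and Hle: "\<And>w. norm w < 1 \<Longrightarrow> norm (H w) \<le> 1"
    and Hf: "\<And>w. w \<noteq> 0 \<Longrightarrow> H w = f (inverse w)"
    and sym: "\<And>z. f (cnj z) = cnj (f z)"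
    and fz: "f (cis \<omega>) = cis \<theta>"
  shows "Re (cis \<omega> * deriv f (cis \<omega>) * cnj (cis \<theta>)) \<le> 0 \<and>
         Re (cis \<omega> * deriv f (cis \<omega>) * cnj (cis \<theta>)) * cmod (1 - (cis \<omega>)\<^sup>2) \<le> - cmod (1 - (cis \<theta>)\<^sup>2)"
proof -
  define z0 where "z0 = cis \<omega>"
  define tau where "tau = cis \<theta>"
  define c where "c = deriv f z0"
  define D where "D = Re (z0 * c * cnj tau)"
  define y where "y r = z0 / complex_of_real r" for r
  define F where "F r = f (y r)" for r
  have nz0: "cmod z0 = 1" by (simp add: z0_def)
  have ntau: "cmod tau = 1" by (simp add: tau_def)
  have z0ne: "z0 \<noteq> 0" using nz0 by auto
  have hder: "(f has_field_derivative c) (at z0)"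
    unfolding c_def z0_def by (rule holomorphic_derivI[OF holf S(1) S(2)])
  have fcont: "isCont f z0" using hder by (rule DERIV_isCont)
  have fz0: "f z0 = tau" by (simp add: z0_def tau_def fz)
  have evr: "\<forall>\<^sub>F r in at_left (1::real). r \<in> {0<..<1}" by (rule eventually_at_left_real) simp
  have key: "cmod (1 - (F r)\<^sup>2) \<le> (1 - (cmod (F r))\<^sup>2) / (1 - r) / (1 + r) * cmod (1 - (complex_of_real r)\<^sup>2 * z0\<^sup>2)
             \<and> 0 \<le> (1 - (cmod (F r))\<^sup>2) / (1 - r)" if r: "r \<in> {0<..<1}" for r
  proof -
    define z where "z = complex_of_real r * cnj z0"
    define w where "w = complex_of_real r * z0"
    have nz: "norm z = r" "norm w = r" using r nz0 by (auto simp: z_def w_def norm_mult)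
    have zne: "z \<noteq> 0" "w \<noteq> 0" using nz r by auto
    have icz: "inverse (cnj z0) = z0" by (simp add: z0_def cis_cnj cis_inverse)
    have icz': "inverse z0 = cnj z0" by (simp add: z0_def cis_cnj cis_inverse)
    have iz: "inverse z = y r"
    proof -
      have "inverse z = inverse (complex_of_real r) * z0" by (simp only: z_def inverse_mult_distrib icz)
      then show ?thesis by (simp add: y_def divide_inverse_commute)
    qed
    have iw: "inverse w = cnj (y r)"
    proof -
      have "inverse w = inverse (complex_of_real r) * cnj z0" by (simp only: w_def inverse_mult_distrib icz')
      then show ?thesis by (simp add: y_def divide_inverse_commute)
    qed
    have Hz: "H z = F r" using Hf[OF zne(1)] by (simp only: iz F_def)
    have Hw: "H w = cnj (F r)" using Hf[OF zne(2)] sym[of "y r"] by (simp only: iw F_def)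
    have pick: "(1 - (cmod z)\<^sup>2) * (1 - (cmod w)\<^sup>2) * (cmod (1 - H z * cnj (H w)))\<^sup>2
       \<le> (1 - (cmod (H z))\<^sup>2) * (1 - (cmod (H w))\<^sup>2) * (cmod (1 - z * cnj w))\<^sup>2"
      by (rule schwarz_pick_le[OF holH Hle]) (use nz r in auto)
    have e1: "1 - z * cnj w = cnj (1 - (complex_of_real r)\<^sup>2 * z0\<^sup>2)"
      by (simp add: z_def w_def power2_eq_square mult_ac)
    have Fle: "cmod (F r) \<le> 1" using Hle[of z] nz r Hz by auto
    have Fle2: "0 \<le> 1 - (cmod (F r))\<^sup>2" using Fle by (simp add: abs_square_le_1)
    have "((1 - r\<^sup>2) * cmod (1 - (F r)\<^sup>2))\<^sup>2 \<le> ((1 - (cmod (F r))\<^sup>2) * cmod (1 - (complex_of_real r)\<^sup>2 * z0\<^sup>2))\<^sup>2"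
      using pick unfolding Hz Hw e1 complex_mod_cnj complex_cnj_cnj nz
      by (simp add: power2_eq_square mult_ac)
    then have "(1 - r\<^sup>2) * cmod (1 - (F r)\<^sup>2) \<le> (1 - (cmod (F r))\<^sup>2) * cmod (1 - (complex_of_real r)\<^sup>2 * z0\<^sup>2)"
      by (rule power2_le_imp_le) (use Fle2 in simp)
    moreover have "1 - r\<^sup>2 = (1 - r) * (1 + r)" by (simp add: power2_eq_square algebra_simps)
    moreover have "(1 - r) * (1 + r) > 0" using r by auto
    ultimately have "cmod (1 - (F r)\<^sup>2) \<le> (1 - (cmod (F r))\<^sup>2) * cmod (1 - (complex_of_real r)\<^sup>2 * z0\<^sup>2) / ((1 - r) * (1 + r))"
      by (simp add: le_divide_eq mult.commute)
    then show ?thesis using Fle2 r by (simp add: field_simps)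
  qed
  have Ty: "(y \<longlongrightarrow> z0) (at_left 1)"
  proof -
    have "((\<lambda>r. z0 / complex_of_real r) \<longlongrightarrow> z0 / complex_of_real 1) (at_left 1)"
      by (intro tendsto_intros) auto
    then show ?thesis by (simp add: y_def[abs_def])
  qed
  have yne: "\<forall>\<^sub>F r in at_left 1. y r \<noteq> z0"
    using evr
  proof eventually_elim
    case (elim r)
    then show ?case using z0ne by (auto simp: y_def field_simps)
  qed
  have fy: "filterlim y (at z0) (at_left 1)" by (rule filterlim_atI[OF Ty yne])
  have TF: "(F \<longlongrightarrow> tau) (at_left 1)"
    unfolding F_def[abs_def] using isCont_tendsto_compose[OF fcont Ty] fz0 by simp
  have Tdq: "((\<lambda>r. (F r - tau) / (y r - z0)) \<longlongrightarrow> c) (at_left 1)"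
  proof -
    have "((\<lambda>v. (f v - f z0) / (v - z0)) \<longlongrightarrow> c) (at z0)"
      using hder by (simp add: has_field_derivative_iff)
    from filterlim_compose[OF this fy] show ?thesis by (simp add: F_def fz0 o_def)
  qed
  have Tyq: "((\<lambda>r. (y r - z0) / complex_of_real (r - 1)) \<longlongrightarrow> - z0) (at_left 1)"
  proof -
    have "((\<lambda>r. - z0 / complex_of_real r) \<longlongrightarrow> - z0 / complex_of_real 1) (at_left 1)"
      by (intro tendsto_intros) auto
    then have "((\<lambda>r. - z0 / complex_of_real r) \<longlongrightarrow> - z0) (at_left 1)" by simp
    then show ?thesis
    proof (rule Lim_transform_eventually)
      show "\<forall>\<^sub>F r in at_left 1. - z0 / complex_of_real r = (y r - z0) / complex_of_real (r - 1)"
        using evr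
      proof eventually_elim
        case (elim r)
        then have "complex_of_real r \<noteq> 0" "complex_of_real (r - 1) \<noteq> 0" by auto
        then show ?case by (simp add: y_def field_simps)
      qed
    qed
  qed
  define qd where "qd r = (tau - F r) / complex_of_real (1 - r)" for r
  have Tqd: "(qd \<longlongrightarrow> - (z0 * c)) (at_left 1)"
  proof -
    have "((\<lambda>r. (F r - tau) / (y r - z0) * ((y r - z0) / complex_of_real (r - 1))) \<longlongrightarrow> c * (- z0)) (at_left 1)"
      by (rule tendsto_mult[OF Tdq Tyq])
    then have "((\<lambda>r. (F r - tau) / (y r - z0) * ((y r - z0) / complex_of_real (r - 1))) \<longlongrightarrow> - (z0 * c)) (at_left 1)"
      by (metis mult.commute mult_minus_right)
    then show ?thesis
    proof (rule Lim_transform_eventually)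
      show "\<forall>\<^sub>F r in at_left 1. (F r - tau) / (y r - z0) * ((y r - z0) / complex_of_real (r - 1)) = qd r"
        using eventually_conj[OF evr yne]
      proof eventually_elim
        case (elim r)
        then have a: "y r - z0 \<noteq> 0" "complex_of_real (r - 1) \<noteq> 0" "complex_of_real (1 - r) \<noteq> 0" by auto
        have "(F r - tau) / (y r - z0) * ((y r - z0) / complex_of_real (r - 1)) = (F r - tau) / complex_of_real (r - 1)"
          using a(1) by simp
        also have "\<dots> = qd r"
        proof -
          have "(F r - tau) / complex_of_real (r - 1) = (- (tau - F r)) / (- complex_of_real (1 - r))"
            by (simp only: minus_diff_eq of_real_minus[symmetric])
          then show ?thesis unfolding qd_def by (simp only: minus_divide_divide)
        qed
        finally show ?case .
      qed
    qed
  qed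
  define N where "N r = (1 - (cmod (F r))\<^sup>2) / (1 - r)" for r
  have TN: "(N \<longlongrightarrow> - 2 * D) (at_left 1)"
  proof -
    have "((\<lambda>r. Re (cnj tau * qd r) + Re (F r * cnj (qd r))) \<longlongrightarrow>
          Re (cnj tau * - (z0 * c)) + Re (tau * cnj (- (z0 * c)))) (at_left 1)"
      by (intro tendsto_intros Tqd TF)
    moreover have "Re (cnj tau * - (z0 * c)) + Re (tau * cnj (- (z0 * c))) = - 2 * D"
    proof -
      have "Re (tau * cnj (- (z0 * c))) = Re (cnj tau * - (z0 * c))"
        by (simp add: algebra_simps)
      then show ?thesis by (simp add: D_def algebra_simps)
    qed
    ultimately have "((\<lambda>r. Re (cnj tau * qd r) + Re (F r * cnj (qd r))) \<longlongrightarrow> - 2 * D) (at_left 1)" by simp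
    then show ?thesis
    proof (rule Lim_transform_eventually)
      show "\<forall>\<^sub>F r in at_left 1. Re (cnj tau * qd r) + Re (F r * cnj (qd r)) = N r"
        using evr
      proof eventually_elim
        case (elim r)
        then have a: "1 - r \<noteq> 0" by auto
        have "Re (cnj tau * qd r) + Re (F r * cnj (qd r))
             = (Re (cnj tau * (tau - F r)) + Re (F r * cnj (tau - F r))) / (1 - r)"
          unfolding qd_def by (simp only: times_divide_eq_right complex_cnj_divide complex_cnj_complex_of_real Re_divide_of_real add_divide_distrib)
        also have "\<dots> = N r" unfolding N_def re_identity[OF ntau] ..
        finally show ?case .
      qed
    qed
  qed
  have TR: "((\<lambda>r. N r / (1 + r) * cmod (1 - (complex_of_real r)\<^sup>2 * z0\<^sup>2)) \<longlongrightarrow>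
            (- 2 * D) / (1 + 1) * cmod (1 - (complex_of_real 1)\<^sup>2 * z0\<^sup>2)) (at_left 1)"
    by (intro tendsto_intros TN) auto
  have TL: "((\<lambda>r. cmod (1 - (F r)\<^sup>2)) \<longlongrightarrow> cmod (1 - tau\<^sup>2)) (at_left 1)"
    by (intro tendsto_intros TF)
  have le1: "cmod (1 - tau\<^sup>2) \<le> (- 2 * D) / (1 + 1) * cmod (1 - (complex_of_real 1)\<^sup>2 * z0\<^sup>2)"
  proof (rule tendsto_le[OF _ TR TL])
    show "\<forall>\<^sub>F r in at_left 1. cmod (1 - (F r)\<^sup>2) \<le> N r / (1 + r) * cmod (1 - (complex_of_real r)\<^sup>2 * z0\<^sup>2)"
      using evr by eventually_elim (use key in \<open>auto simp: N_def\<close>)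
  qed simp
  have le2: "0 \<le> - 2 * D"
  proof (rule tendsto_le[OF _ TN tendsto_const])
    show "\<forall>\<^sub>F r in at_left 1. 0 \<le> N r"
      using evr by eventually_elim (use key in \<open>auto simp: N_def\<close>)
  qed simp
  have l1: "cmod (1 - tau\<^sup>2) \<le> - D * cmod (1 - z0\<^sup>2)" using le1 by simp
  have "D \<le> 0" using le2 by simp
  moreover have "D * cmod (1 - z0\<^sup>2) \<le> - cmod (1 - tau\<^sup>2)" using l1 by linarith
  ultimately show ?thesis unfolding D_def c_def z0_def tau_def by blast
qed



lemma open_poly_ne: "open {z::complex. poly q z \<noteq> 0}"
  by (intro open_Collect_neq continuous_intros)

lemma RH_holo:
  assumes "f \<in> RH_inf"
  shows "\<exists>S. open S \<and> (\<forall>z. 1 \<le> cmod z \<longrightarrow> z \<in> S) \<and> f holomorphic_on S \<and> (\<forall>z. f (cnj z) = cnj (f z))"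
proof -
  obtain p q :: "real poly" where q0: "q \<noteq> 0" and deg: "degree p \<le> degree q"
    and roots: "\<forall>z. poly (map_poly complex_of_real q) z = 0 \<longrightarrow> cmod z < 1"
    and feq: "f = (\<lambda>z. poly (map_poly complex_of_real p) z / poly (map_poly complex_of_real q) z)"
    using assms unfolding RH_inf_def by blast
  define S where "S = {z. poly (map_poly complex_of_real q) z \<noteq> 0}"
  have "open S" unfolding S_def by (rule open_poly_ne)
  moreover have "\<forall>z. 1 \<le> cmod z \<longrightarrow> z \<in> S" using roots by (force simp: S_def)
  moreover have "f holomorphic_on S" unfolding feq S_def by (intro holomorphic_intros) auto
  moreover have "f (cnj z) = cnj (f z)" for z
  proof -
    have r: "\<And>n. poly.coeff (map_poly complex_of_real r) n \<in> \<real>" for r :: "real poly"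
      by (simp add: coeff_map_poly)
    show ?thesis unfolding feq by (simp add: poly_cnj_real[OF r])
  qed
  ultimately show ?thesis by blast
qed

lemma RH_H:
  assumes "f \<in> RH_inf" and bnd: "\<And>u. cmod u = 1 \<Longrightarrow> cmod (f u) \<le> 1"
  shows "\<exists>H. H holomorphic_on ball 0 1 \<and> (\<forall>w. norm w < 1 \<longrightarrow> norm (H w) \<le> 1) \<and> (\<forall>w. w \<noteq> 0 \<longrightarrow> H w = f (inverse w))"
proof -
  obtain p q :: "real poly" where q0: "q \<noteq> 0" and deg: "degree p \<le> degree q"
    and roots: "\<forall>z. poly (map_poly complex_of_real q) z = 0 \<longrightarrow> cmod z < 1"
    and feq: "f = (\<lambda>z. poly (map_poly complex_of_real p) z / poly (map_poly complex_of_real q) z)"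
    using assms unfolding RH_inf_def by blast
  define pc where "pc = map_poly complex_of_real p"
  define qc where "qc = map_poly complex_of_real q"
  have dpc: "degree pc = degree p" unfolding pc_def by (rule degree_map_poly) simp
  have dqc: "degree qc = degree q" unfolding qc_def by (rule degree_map_poly) simp
  have qc0: "qc \<noteq> 0" unfolding qc_def using q0 by (simp add: map_poly_eq_0_iff)
  define H where "H w = w ^ (degree qc - degree pc) * poly (reflect_poly pc) w / poly (reflect_poly qc) w" for w
  have HF: "H w = f (inverse w)" if w: "w \<noteq> 0" for w
  proof -
    have "H w = w ^ (degree qc - degree pc) * (w ^ degree pc * poly pc (inverse w)) / (w ^ degree qc * poly qc (inverse w))"
      unfolding H_def using w by (simp add: poly_reflect_poly_nz)
    also have "\<dots> = (w ^ (degree qc - degree pc) * w ^ degree pc) * poly pc (inverse w) / (w ^ degree qc * poly qc (inverse w))"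
      by (simp add: mult_ac)
    also have "w ^ (degree qc - degree pc) * w ^ degree pc = w ^ degree qc"
      using deg dpc dqc by (simp add: power_add[symmetric])
    also have "w ^ degree qc * poly pc (inverse w) / (w ^ degree qc * poly qc (inverse w)) = poly pc (inverse w) / poly qc (inverse w)"
      using w by simp
    finally show ?thesis by (simp add: feq pc_def qc_def)
  qed
  define S1 where "S1 = {w. poly (reflect_poly qc) w \<noteq> 0}"
  have oS1: "open S1" unfolding S1_def by (rule open_poly_ne)
  have holS1: "H holomorphic_on S1" unfolding H_def S1_def by (intro holomorphic_intros) auto
  have cb: "cball 0 1 \<subseteq> S1"
  proof
    fix w :: complex assume "w \<in> cball 0 1"
    then have w1: "norm w \<le> 1" by simp
    show "w \<in> S1"
    proof (cases "w = 0")
      case True then show ?thesis using qc0 by (simp add: S1_def)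
    next
      case False
      have "1 \<le> cmod (inverse w)" using w1 False by (simp add: norm_inverse one_le_inverse_iff)
      then have "poly qc (inverse w) \<noteq> 0" using roots by (force simp: qc_def)
      then show ?thesis using False by (simp add: S1_def poly_reflect_poly_nz)
    qed
  qed
  have holH: "H holomorphic_on ball 0 1" by (rule holomorphic_on_subset[OF holS1]) (use cb in auto)
  have Hle: "norm (H w) \<le> 1" if "norm w < 1" for w
  proof (rule maximum_modulus_frontier[of H "ball 0 1"])
    show "H holomorphic_on interior (ball 0 1)" using holH by simp
    show "continuous_on (closure (ball 0 1)) H"
      using holomorphic_on_imp_continuous_on[OF holS1] cb by (simp add: continuous_on_subset)
    show "bounded (ball (0::complex) 1)" by simp
    show "w \<in> ball 0 1" using that by simp
    show "norm (H u) \<le> 1" if "u \<in> frontier (ball 0 1)" for u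
    proof -
      have u: "norm u = 1" using that by simp
      then have "u \<noteq> 0" by auto
      then have "H u = f (inverse u)" by (rule HF)
      moreover have "cmod (inverse u) = 1" using u by (simp add: norm_inverse)
      ultimately show ?thesis using bnd by simp
    qed
  qed
  show ?thesis using holH Hle HF by blast
qed

lemma RF_circle:
  assumes "f \<in> RF \<omega>p \<theta>p" "cmod u = 1"
  shows "cmod (f u) \<le> 1"
proof -
  have fR: "f \<in> RH_inf" and hn: "hinf_norm f = 1" using assms(1) by (auto simp: RF_def)
  obtain S where S: "open S" "\<forall>z. 1 \<le> cmod z \<longrightarrow> z \<in> S" "f holomorphic_on S"
    using RH_holo[OF fR] by blast
  have contf: "continuous_on S f" using S(3) by (rule holomorphic_on_imp_continuous_on)
  have cc: "continuous_on UNIV (\<lambda>t. cmod (f (cis t)))"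
  proof (intro continuous_intros)
    show "continuous_on UNIV (\<lambda>t. f (cis t))"
      by (rule continuous_on_compose2[OF contf]) (use S(2) in \<open>auto intro!: continuous_intros\<close>)
  qed
  have "compact ((\<lambda>t. cmod (f (cis t))) ` {-pi..pi})"
    by (rule compact_continuous_image) (use cc in \<open>auto intro: continuous_on_subset\<close>)
  then have "bdd_above ((\<lambda>t. cmod (f (cis t))) ` {-pi..pi})"
    by (intro bounded_imp_bdd_above compact_imp_bounded)
  then have bdd: "bdd_above ((\<lambda>t. cmod (f (cis t))) ` {-pi<..pi})"
    by (rule bdd_above_mono) auto
  have u0: "u \<noteq> 0" using assms(2) by auto
  have "cis (Arg u) = u" using assms(2) u0 by (simp add: cis_Arg sgn_div_norm)
  moreover have "Arg u \<in> {-pi<..pi}" using Arg_bounded[of u] by auto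
  ultimately have "cmod (f u) \<le> hinf_norm f"
    unfolding hinf_norm_def using cSUP_upper[OF _ bdd] by metis
  then show ?thesis using hn by simp
qed

lemma RF_bound:
  assumes fR: "f \<in> RF \<omega>p \<theta>p"
  shows "phase_deriv f \<omega>p \<le> 0 \<and> phase_deriv f \<omega>p * cmod (1 - (cis \<omega>p)\<^sup>2) \<le> - cmod (1 - (cis \<theta>p)\<^sup>2)"
proof -
  have fR': "f \<in> RH_inf" and fz: "f (cis \<omega>p) = cis \<theta>p" using fR by (auto simp: RF_def)
  obtain S where S: "open S" "\<forall>z. 1 \<le> cmod z \<longrightarrow> z \<in> S" "f holomorphic_on S" "\<forall>z. f (cnj z) = cnj (f z)"
    using RH_holo[OF fR'] by blast
  obtain H where H: "H holomorphic_on ball 0 1" "\<forall>w. norm w < 1 \<longrightarrow> norm (H w) \<le> 1" "\<forall>w. w \<noteq> 0 \<longrightarrow> H w = f (inverse w)"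
    using RH_H[OF fR' RF_circle[OF fR]] by blast
  have cS: "cis \<omega>p \<in> S" using S(2) by simp
  have "phase_deriv f \<omega>p = Re (cis \<omega>p * deriv f (cis \<omega>p) * cnj (cis \<theta>p))"
    by (rule phase_deriv_eq[OF S(1) cS S(3) fz])
  moreover have "Re (cis \<omega>p * deriv f (cis \<omega>p) * cnj (cis \<theta>p)) \<le> 0 \<and>
         Re (cis \<omega>p * deriv f (cis \<omega>p) * cnj (cis \<theta>p)) * cmod (1 - (cis \<omega>p)\<^sup>2) \<le> - cmod (1 - (cis \<theta>p)\<^sup>2)"
    by (rule boundary_bound[OF S(1) cS S(3) H(1)]) (use H S fz in auto)
  ultimately show ?thesis by simp
qed



lemma cmod_one_minus_cis_sq: "cmod (1 - (cis x)\<^sup>2) = 2 * \<bar>sin x\<bar>"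
proof -
  have c2: "(cis x)\<^sup>2 = cis (2 * x)" by (metis cis_mult mult_2 power2_eq_square)
  have "(cmod (1 - cis (2 * x)))\<^sup>2 = (1 - cos (2 * x))\<^sup>2 + (sin (2 * x))\<^sup>2"
    unfolding cmod_power2 by simp
  also have "\<dots> = (2 * (sin x)\<^sup>2)\<^sup>2 + (2 * sin x * cos x)\<^sup>2"
    by (simp only: cos_double_sin sin_double) simp
  also have "\<dots> = 4 * (sin x)\<^sup>2 * ((sin x)\<^sup>2 + (cos x)\<^sup>2)"
    by algebra
  also have "\<dots> = (2 * \<bar>sin x\<bar>)\<^sup>2" by (simp add: power_mult_distrib)
  finally have "(cmod (1 - (cis x)\<^sup>2))\<^sup>2 = (2 * \<bar>sin x\<bar>)\<^sup>2" by (simp only: c2)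
  then show ?thesis by (rule power2_eq_imp_eq) auto
qed

lemma const_in_RF:
  assumes c: "c \<in> {1, -1::complex}" and fz: "c = cis \<theta>p"
  shows "(\<lambda>z. c) \<in> RF \<omega>p \<theta>p \<and> phase_deriv (\<lambda>z. c) \<omega>p = 0"
proof -
  define cr where "cr = Re c"
  have crc: "complex_of_real cr = c" using c by (auto simp: cr_def)
  have "(\<lambda>z. c) \<in> RH_inf"
    unfolding RH_inf_def
    by (rule CollectI, rule exI[of _ "[:cr:]"], rule exI[of _ 1]) (auto simp: crc fun_eq_iff map_poly_pCons)
  moreover have nc: "cmod c = 1" using c by auto
  moreover have "hinf_norm (\<lambda>z. c) = 1" unfolding hinf_norm_def using nc by simp
  moreover have "phase_deriv (\<lambda>z. c) \<omega>p = Re (cis \<omega>p * deriv (\<lambda>z. c) (cis \<omega>p) * cnj (cis \<theta>p))"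
    by (rule phase_deriv_eq[of UNIV]) (auto simp: fz)
  ultimately show ?thesis using fz by (simp add: RF_def)
qed



lemma allpass_alg:
  fixes x y u v sr :: real
  assumes xy: "x\<^sup>2 + y\<^sup>2 = 1" and uv: "u\<^sup>2 + v\<^sup>2 = 1" and s: "sr = 1 \<or> sr = -1"
  defines "Dn \<equiv> 1 - sr * (u * x + v * y)"
  shows "x * (u * Dn + (sr * x - u)) - y * v * Dn = sr * ((sr * x - u) * u + Dn)"
    and "x * v * Dn + y * (u * Dn + (sr * x - u)) = sr * (sr * x - u) * v"
proof -
  have v2: "v\<^sup>2 = 1 - u\<^sup>2" and y2: "y\<^sup>2 = 1 - x\<^sup>2" using xy uv by auto
  have sq: "sr * sr = 1" using s by auto
  have "x * (u * Dn + (sr * x - u)) - y * v * Dn - sr * ((sr * x - u) * u + Dn)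
      = sr * (x\<^sup>2 + u\<^sup>2 - 1 - u\<^sup>2 * x\<^sup>2 + v\<^sup>2 * y\<^sup>2) + (sr * sr - 1) * (v * y)"
    unfolding Dn_def by (simp add: algebra_simps power2_eq_square)
  also have "\<dots> = 0" unfolding v2 y2 sq by (simp add: algebra_simps)
  finally show "x * (u * Dn + (sr * x - u)) - y * v * Dn = sr * ((sr * x - u) * u + Dn)" by simp
  have "x * v * Dn + y * (u * Dn + (sr * x - u)) - sr * (sr * x - u) * v
      = - sr * (u * v * (x\<^sup>2 + y\<^sup>2 - 1) + x * y * (u\<^sup>2 + v\<^sup>2 - 1)) + (1 - sr * sr) * (x * v)"
    unfolding Dn_def by (simp add: algebra_simps power2_eq_square)
  also have "\<dots> = 0" using xy uv sq by simp
  finally show "x * v * Dn + y * (u * Dn + (sr * x - u)) = sr * (sr * x - u) * v" by simp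
qed



lemma allpass:
  assumes w: "0 < \<omega>" "\<omega> < pi" and y0: "sin \<theta> \<noteq> 0"
  shows "\<exists>s\<in>{1, -1::complex}. \<exists>a::real. \<bar>a\<bar> < 1 \<and>
           (\<lambda>z. s * (of_real a * z + 1) / (z + of_real a)) \<in> RF \<omega> \<theta> \<and>
           phase_deriv (\<lambda>z. s * (of_real a * z + 1) / (z + of_real a)) \<omega> = - \<bar>sin \<theta> / sin \<omega>\<bar>"
proof -
  define x where "x = cos \<theta>"
  define y where "y = sin \<theta>"
  define u where "u = cos \<omega>"
  define v where "v = sin \<omega>"
  have vpos: "v > 0" unfolding v_def using w by (intro sin_gt_zero) auto
  define sr :: real where "sr = (if y > 0 then -1 else 1)"
  have sr: "sr = 1 \<or> sr = -1" by (simp add: sr_def)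
  have sq: "sr * sr = 1" using sr by auto
  have sy: "sr * y = - \<bar>y\<bar>" using y0 by (auto simp: sr_def y_def)
  have xy: "x\<^sup>2 + y\<^sup>2 = 1" by (simp add: x_def y_def add.commute)
  have uv: "u\<^sup>2 + v\<^sup>2 = 1" by (simp add: u_def v_def add.commute)
  have xb: "\<bar>x\<bar> \<le> 1" by (simp add: x_def)
  have ub: "\<bar>u\<bar> \<le> 1" by (simp add: u_def)
  define Dn where "Dn = 1 - sr * (u * x + v * y)"
  define aD where "aD = sr * x - u"
  have yne: "y \<noteq> 0" using y0 by (simp add: y_def)
  have svy: "- sr * v * y > 0"
  proof -
    have "- sr * v * y = v * (- (sr * y))" by simp
    also have "\<dots> = v * \<bar>y\<bar>" using sy by simp
    finally show ?thesis using vpos yne by simp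
  qed
  have sxb: "\<bar>sr * x\<bar> \<le> 1" using sr xb by auto
  have h1: "Dn - aD > 0"
  proof -
    have "Dn - aD = (1 + u) * (1 - sr * x) + (- sr * v * y)" by (simp add: Dn_def aD_def algebra_simps)
    moreover have "(1 + u) * (1 - sr * x) \<ge> 0" using ub sxb by (intro mult_nonneg_nonneg) auto
    ultimately show ?thesis using svy by linarith
  qed
  have h2: "Dn + aD > 0"
  proof -
    have "Dn + aD = (1 - u) * (1 + sr * x) + (- sr * v * y)" by (simp add: Dn_def aD_def algebra_simps)
    moreover have "(1 - u) * (1 + sr * x) \<ge> 0" using ub sxb by (intro mult_nonneg_nonneg) auto
    ultimately show ?thesis using svy by linarith
  qed
  have Dpos: "Dn > 0" using h1 h2 by linarith
  define a where "a = aD / Dn"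
  have aDn: "a * Dn = aD" using Dpos by (simp add: a_def)
  have abs_a: "\<bar>a\<bar> < 1" using h1 h2 Dpos by (simp add: a_def abs_less_iff divide_less_eq less_divide_eq)
  have E1D: "x * (u * Dn + aD) - y * v * Dn = sr * (aD * u + Dn)"
    using allpass_alg(1)[OF xy uv sr] by (simp add: Dn_def aD_def)
  have E2D: "x * v * Dn + y * (u * Dn + aD) = sr * aD * v"
    using allpass_alg(2)[OF xy uv sr] by (simp add: Dn_def aD_def)
  have E1: "x * (u + a) - y * v = sr * (a * u + 1)"
  proof -
    have "(x * (u + a) - y * v) * Dn = (sr * (a * u + 1)) * Dn"
      using E1D unfolding aDn[symmetric] by (simp add: algebra_simps)
    then show ?thesis using Dpos by simp
  qed
  have E2: "x * v + y * (u + a) = sr * a * v"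
  proof -
    have "(x * v + y * (u + a)) * Dn = (sr * a * v) * Dn"
      using E2D unfolding aDn[symmetric] by (simp add: algebra_simps)
    then show ?thesis using Dpos by simp
  qed
  define s where "s = complex_of_real sr"
  have sin: "s \<in> {1, -1}" using sr by (auto simp: s_def)
  define g where "g = (\<lambda>z. s * (of_real a * z + 1) / (z + of_real a))"
  have Wne: "z + complex_of_real a \<noteq> 0" if "cmod z \<ge> 1" for z
  proof
    assume "z + complex_of_real a = 0"
    then have "z = - complex_of_real a" by (simp add: add_eq_0_iff)
    then have "cmod z = \<bar>a\<bar>" by simp
    then show False using that abs_a by simp
  qed
  have unit: "cmod (g z) = 1" if z: "cmod z = 1" for z
  proof -
    have zz: "z * cnj z = 1" using z by (metis complex_norm_square of_real_1 power_one)
    then have zz': "cnj z * z = 1" by (simp add: mult.commute)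
    have "complex_of_real a * z + 1 = z * cnj (z + complex_of_real a)"
      using zz zz' by (simp add: algebra_simps)
    then have "cmod (complex_of_real a * z + 1) = cmod (z + complex_of_real a)"
      using z by (simp add: norm_mult) (metis complex_cnj_add complex_cnj_complex_of_real complex_mod_cnj)
    moreover have "cmod s = 1" using sin by auto
    ultimately show ?thesis using Wne[of z] z by (simp add: g_def norm_mult norm_divide)
  qed
  have RH: "g \<in> RH_inf"
  proof -
    have "g = (\<lambda>z. poly (map_poly complex_of_real [:sr, sr * a:]) z / poly (map_poly complex_of_real [:a, 1:]) z)"
      by (auto simp: g_def s_def fun_eq_iff map_poly_pCons algebra_simps)
    moreover have "\<forall>z. poly (map_poly complex_of_real [:a, 1:]) z = 0 \<longrightarrow> cmod z < 1"
    proof (intro allI impI)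
      fix z assume "poly (map_poly complex_of_real [:a, 1:]) z = 0"
      then have "z + complex_of_real a = 0" by (simp add: map_poly_pCons add.commute)
      then show "cmod z < 1" using Wne[of z] by force
    qed
    moreover have "degree [:sr, sr * a:] \<le> degree [:a, (1::real):]" by simp
    moreover have "[:a, (1::real):] \<noteq> 0" by simp
    ultimately show ?thesis unfolding RH_inf_def by blast
  qed
  have hn: "hinf_norm g = 1"
  proof -
    have "(SUP t\<in>{-pi<..pi}. cmod (g (cis t))) = (SUP t\<in>{-pi<..pi}. 1::real)"
      by (rule SUP_cong) (auto intro: unit)
    also have "\<dots> = 1" by (rule cSUP_const) auto
    finally show ?thesis by (simp add: hinf_norm_def)
  qed
  define z0 where "z0 = cis \<omega>"
  define tau where "tau = cis \<theta>"
  have nz0: "cmod z0 = 1" by (simp add: z0_def)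
  have W0: "z0 + complex_of_real a \<noteq> 0" using Wne nz0 by simp
  have tW: "tau * (z0 + complex_of_real a) = s * (complex_of_real a * z0 + 1)"
    using E1 E2 by (simp add: complex_eq_iff tau_def z0_def s_def x_def y_def u_def v_def algebra_simps)
  have gz: "g z0 = tau" using tW W0 by (simp add: g_def field_simps)
  have RFg: "g \<in> RF \<omega> \<theta>" using RH hn unit[OF nz0] gz by (simp add: RF_def z0_def tau_def)
  define S where "S = {z. z + complex_of_real a \<noteq> 0}"
  have oS: "open S" unfolding S_def by (intro open_Collect_neq continuous_intros)
  have holg: "g holomorphic_on S" unfolding g_def S_def by (intro holomorphic_intros) auto
  have z0S: "z0 \<in> S" using W0 by (simp add: S_def)
  have dg: "(g has_field_derivative s * (complex_of_real a * (z0 + complex_of_real a) - (complex_of_real a * z0 + 1)) / (z0 + complex_of_real a)\<^sup>2) (at z0)"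
    unfolding g_def using W0
    by (auto intro!: derivative_eq_intros simp: power2_eq_square field_simps)
  have deriv_g: "deriv g z0 = s * (complex_of_real (a\<^sup>2 - 1)) / (z0 + complex_of_real a)\<^sup>2"
    using DERIV_imp_deriv[OF dg] by (simp add: algebra_simps power2_eq_square)
  have pd: "phase_deriv g \<omega> = Re (z0 * deriv g z0 * cnj tau)"
    unfolding z0_def tau_def by (rule phase_deriv_eq[OF oS _ holg]) (use z0S gz in \<open>simp_all add: z0_def tau_def\<close>)
  define W where "W = z0 + complex_of_real a"
  define N where "N = (cmod W)\<^sup>2"
  have Npos: "N > 0" using W0 by (simp add: N_def W_def)
  have ctau: "cnj tau = s * (complex_of_real a * cnj z0 + 1) / cnj W"
  proof -
    have "tau = s * (complex_of_real a * z0 + 1) / W" using tW W0 by (simp add: W_def field_simps)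
    then show ?thesis by (simp add: s_def)
  qed
  have zz: "z0 * cnj z0 = 1" using nz0 by (metis complex_norm_square of_real_1 power_one)
  have "z0 * deriv g z0 * cnj tau = s * s * complex_of_real (a\<^sup>2 - 1) * (z0 * (complex_of_real a * cnj z0 + 1)) / (W\<^sup>2 * cnj W)"
    unfolding deriv_g ctau W_def by (simp add: field_simps)
  also have "z0 * (complex_of_real a * cnj z0 + 1) = W"
    unfolding W_def using zz by (simp add: algebra_simps)
  also have "s * s = 1" using sq by (simp add: s_def of_real_mult[symmetric])
  also have "W\<^sup>2 * cnj W = W * complex_of_real N"
  proof -
    have "W * cnj W = complex_of_real N" unfolding N_def by (rule complex_norm_square[symmetric])
    moreover have "W\<^sup>2 * cnj W = W * (W * cnj W)" by (simp add: power2_eq_square mult.assoc)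
    ultimately show ?thesis by simp
  qed
  finally have eqq: "z0 * deriv g z0 * cnj tau = 1 * complex_of_real (a\<^sup>2 - 1) * W / (W * complex_of_real N)" .
  have Wne: "W \<noteq> 0" using W0 by (simp add: W_def)
  have "1 * complex_of_real (a\<^sup>2 - 1) * W / (W * complex_of_real N) = complex_of_real (a\<^sup>2 - 1) / complex_of_real N"
    using Wne by simp
  with eqq have "z0 * deriv g z0 * cnj tau = complex_of_real ((a\<^sup>2 - 1) / N)" by simp
  then have pdv: "phase_deriv g \<omega> = (a\<^sup>2 - 1) / N" using pd by simp
  have Nexp: "N = (u + a)\<^sup>2 + v\<^sup>2"
    unfolding N_def W_def cmod_power2 by (simp add: z0_def u_def v_def)
  have yN: "y * N = sr * v * (a\<^sup>2 - 1)"
  proof -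
    have "y * N = (x * v + y * (u + a)) * (u + a) - (x * (u + a) - y * v) * v"
      by (simp add: Nexp algebra_simps power2_eq_square)
    also have "\<dots> = sr * v * (a\<^sup>2 - 1)" unfolding E1 E2 by (simp add: algebra_simps power2_eq_square)
    finally show ?thesis .
  qed
  have "(a\<^sup>2 - 1) / N = sr * y / v"
  proof -
    have "sr * y * N = sr * sr * v * (a\<^sup>2 - 1)" using yN by (simp add: mult.assoc)
    then have "sr * y * N = v * (a\<^sup>2 - 1)" using sq by simp
    then show ?thesis using Npos vpos by (simp add: field_simps)
  qed
  also have "\<dots> = - \<bar>sin \<theta> / sin \<omega>\<bar>" using sy vpos by (simp add: y_def v_def abs_divide)
  finally have "phase_deriv g \<omega> = - \<bar>sin \<theta> / sin \<omega>\<bar>" using pdv by simp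
  then show ?thesis using sin abs_a RFg unfolding g_def by blast
qed



lemma SUP_attained:
  fixes g :: "'a \<Rightarrow> real"
  assumes "f0 \<in> A" "\<And>f. f \<in> A \<Longrightarrow> g f \<le> g f0"
  shows "(SUP f\<in>A. g f) = g f0"
  by (rule cSup_eq_maximum) (use assms in auto)

lemma cis_sin0:
  assumes "sin \<theta> = 0"
  shows "cis \<theta> \<in> {1, -1::complex}"
proof -
  have "(cos \<theta>)\<^sup>2 = 1" using sin_cos_squared_add[of \<theta>] assms by simp
  then have "cos \<theta> = 1 \<or> cos \<theta> = -1" by (simp add: power2_eq_1_iff)
  then show ?thesis using assms by (auto simp: complex_eq_iff)
qed

theorem theorem3:
  fixes \<omega>p \<theta>p :: real
  assumes "0 \<le> \<omega>p" and "\<omega>p \<le> pi"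
  shows
    "(0 < \<omega>p \<and> \<omega>p < pi \<longrightarrow>
        (SUP f\<in>RF \<omega>p \<theta>p. phase_deriv f \<omega>p) = - \<bar>sin \<theta>p / sin \<omega>p\<bar>)
   \<and> ((\<omega>p = 0 \<or> \<omega>p = pi) \<and> (\<exists>k::int. \<theta>p = of_int k * pi) \<longrightarrow>
        (SUP f\<in>RF \<omega>p \<theta>p. phase_deriv f \<omega>p) = 0)
   \<and> ((0 < \<omega>p \<and> \<omega>p < pi) \<or> ((\<omega>p = 0 \<or> \<omega>p = pi) \<and> (\<exists>k::int. \<theta>p = of_int k * pi)) \<longrightarrow>
        ((\<exists>k::int. \<theta>p = of_int k * pi) \<longrightarrow>
           (\<exists>c\<in>{1, -1::complex}. (\<lambda>z. c) \<in> RF \<omega>p \<theta>p \<and>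
              phase_deriv (\<lambda>z. c) \<omega>p = (SUP f\<in>RF \<omega>p \<theta>p. phase_deriv f \<omega>p)))
      \<and> (\<not> (\<exists>k::int. \<theta>p = of_int k * pi) \<longrightarrow>
           (\<exists>s\<in>{1, -1::complex}. \<exists>a::real. \<bar>a\<bar> < 1 \<and>
              (\<lambda>z. s * (of_real a * z + 1) / (z + of_real a)) \<in> RF \<omega>p \<theta>p \<and>
              phase_deriv (\<lambda>z. s * (of_real a * z + 1) / (z + of_real a)) \<omega>p
                = (SUP f\<in>RF \<omega>p \<theta>p. phase_deriv f \<omega>p))))"
proof -
  have kiff: "(\<exists>k::int. \<theta>p = of_int k * pi) \<longleftrightarrow> sin \<theta>p = 0"
    by (simp add: sin_zero_iff_int2)
  define S where "S = (SUP f\<in>RF \<omega>p \<theta>p. phase_deriv f \<omega>p)"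
  have le0: "phase_deriv f \<omega>p \<le> 0" if "f \<in> RF \<omega>p \<theta>p" for f
    using RF_bound[OF that] by blast
  have leI: "phase_deriv f \<omega>p \<le> - \<bar>sin \<theta>p / sin \<omega>p\<bar>" if f: "f \<in> RF \<omega>p \<theta>p" and w: "0 < \<omega>p" "\<omega>p < pi" for f
  proof -
    have sw: "sin \<omega>p > 0" using w by (intro sin_gt_zero)
    have "phase_deriv f \<omega>p * (2 * \<bar>sin \<omega>p\<bar>) \<le> - (2 * \<bar>sin \<theta>p\<bar>)"
      using RF_bound[OF f] by (simp add: cmod_one_minus_cis_sq)
    then have "phase_deriv f \<omega>p * sin \<omega>p \<le> - \<bar>sin \<theta>p\<bar>" using sw by (simp add: mult.commute)
    then have "phase_deriv f \<omega>p \<le> (- \<bar>sin \<theta>p\<bar>) / sin \<omega>p" by (simp only: pos_le_divide_eq[OF sw])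
    then show ?thesis using sw by (simp add: abs_divide)
  qed
  have const: "\<exists>c\<in>{1, -1::complex}. (\<lambda>z. c) \<in> RF \<omega>p \<theta>p \<and> phase_deriv (\<lambda>z. c) \<omega>p = 0 \<and> S = 0"
    if s0: "sin \<theta>p = 0"
  proof -
    have cin: "cis \<theta>p \<in> {1, -1}" by (rule cis_sin0[OF s0])
    have cr: "(\<lambda>z. cis \<theta>p) \<in> RF \<omega>p \<theta>p \<and> phase_deriv (\<lambda>z. cis \<theta>p) \<omega>p = 0"
      by (rule const_in_RF[OF cin refl])
    have "S = phase_deriv (\<lambda>z. cis \<theta>p) \<omega>p"
      unfolding S_def by (rule SUP_attained) (use cr le0 in auto)
    then show ?thesis using cin cr by auto
  qed
  have P1: "S = - \<bar>sin \<theta>p / sin \<omega>p\<bar>" if w: "0 < \<omega>p" "\<omega>p < pi"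
  proof (cases "sin \<theta>p = 0")
    case True then show ?thesis using const by auto
  next
    case False
    obtain s a where sa: "s \<in> {1, -1::complex}" "\<bar>a\<bar> < 1"
      "(\<lambda>z. s * (of_real a * z + 1) / (z + of_real a)) \<in> RF \<omega>p \<theta>p"
      "phase_deriv (\<lambda>z. s * (of_real a * z + 1) / (z + of_real a)) \<omega>p = - \<bar>sin \<theta>p / sin \<omega>p\<bar>"
      using allpass[OF w False] by blast
    have "S = phase_deriv (\<lambda>z. s * (of_real a * z + 1) / (z + of_real a)) \<omega>p"
      unfolding S_def by (rule SUP_attained[OF sa(3)]) (use leI w sa(4) in auto)
    then show ?thesis using sa(4) by simp
  qed
  have P2: "S = 0" if "(\<omega>p = 0 \<or> \<omega>p = pi) \<and> (\<exists>k::int. \<theta>p = of_int k * pi)"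
    using const that kiff by auto
  have P3a: "\<exists>c\<in>{1, -1::complex}. (\<lambda>z. c) \<in> RF \<omega>p \<theta>p \<and> phase_deriv (\<lambda>z. c) \<omega>p = S"
    if "\<exists>k::int. \<theta>p = of_int k * pi"
    using const that kiff by auto
  have P3b: "\<exists>s\<in>{1, -1::complex}. \<exists>a::real. \<bar>a\<bar> < 1 \<and>
              (\<lambda>z. s * (of_real a * z + 1) / (z + of_real a)) \<in> RF \<omega>p \<theta>p \<and>
              phase_deriv (\<lambda>z. s * (of_real a * z + 1) / (z + of_real a)) \<omega>p = S"
    if h: "(0 < \<omega>p \<and> \<omega>p < pi) \<or> ((\<omega>p = 0 \<or> \<omega>p = pi) \<and> (\<exists>k::int. \<theta>p = of_int k * pi))"
      and nk: "\<not> (\<exists>k::int. \<theta>p = of_int k * pi)"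
  proof -
    have w: "0 < \<omega>p" "\<omega>p < pi" using h nk by auto
    have s0: "sin \<theta>p \<noteq> 0" using nk kiff by auto
    show ?thesis using allpass[OF w s0] P1[OF w] by simp
  qed
  show ?thesis using P1 P2 P3a P3b unfolding S_def by blast
qed

end
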